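(* Let $G$ be a finitely generated amenable group with a fixed finite symmetric generating set $S$. Let $H_i\subseteq G$ be any sequence of finite index subgroups with $I_i=[G:H_i]\to\infty$, and let $C_i=G/H_i$. Then $$\lim_{i\to\infty}\frac{\operatorname{sw}(C_i)}{I_i}=0.$$
   Context: The coset space $C=G/H$ (cosets $gH$) is given the graph structure of the Schreier graph: there is an edge between distinct cosets $x$ and $y$ iff $y=sx$ for some $s\in S$ (where $G$ acts on cosets by left multiplication). For $A\subseteq C$, $\partial A$ denotes the set of vertices of $A$ adjacent to some vertex of the complement of $A$. A sweepout $\mathfrak F$ of the finite graph $C$ is a nested sequence of subsets $\emptyset=F_0\subseteq F_1\subseteq\dots\subseteq F_{|C|}=C$ with $|F_j|=j$; its width is $\operatorname{w}(\mathfrak F)=\max_j|\partial F_j|$. The sweepout width is $\operatorname{sw}(C)=\min_{\mathfrak F}\operatorname{w}(\mathfrak F)$ over all sweepouts. *)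

theory Defs
  imports "HOL-Analysis.Analysis" "HOL-Algebra.Left_Coset" "HOL-Algebra.Generated_Groups"
begin

definition amenable_group :: "('a, 'b) monoid_scheme \<Rightarrow> bool" where
  "amenable_group G \<longleftrightarrow>
     (\<forall>K eps. finite K \<and> K \<subseteq> carrier G \<and> eps > (0::real) \<longrightarrow>
        (\<exists>F. finite F \<and> F \<noteq> {} \<and> F \<subseteq> carrier G \<and>
             (\<forall>g\<in>K. real (card (((g <#\<^bsub>G\<^esub> F) - F) \<union> (F - (g <#\<^bsub>G\<^esub> F))))
                        < eps * real (card F))))"

definition schreier_adj :: "('a, 'b) monoid_scheme \<Rightarrow> 'a set \<Rightarrow> 'a set \<Rightarrow> 'a set \<Rightarrow> bool" where
  "schreier_adj G S x y \<longleftrightarrow> x \<noteq> y \<and>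
     (\<exists>s\<in>S. y = s <#\<^bsub>G\<^esub> x \<or> x = s <#\<^bsub>G\<^esub> y)"

definition schreier_boundary ::
  "('a, 'b) monoid_scheme \<Rightarrow> 'a set \<Rightarrow> 'a set \<Rightarrow> 'a set set \<Rightarrow> 'a set set" where
  "schreier_boundary G S H A =
     {x\<in>A. \<exists>y\<in>lcosets\<^bsub>G\<^esub> H - A. schreier_adj G S x y}"

definition is_sweepout :: "'c set \<Rightarrow> (nat \<Rightarrow> 'c set) \<Rightarrow> bool" where
  "is_sweepout C F \<longleftrightarrow> F 0 = {} \<and> F (card C) = C \<and>
     (\<forall>j<card C. F j \<subseteq> F (Suc j)) \<and>
     (\<forall>j\<le>card C. F j \<subseteq> C \<and> card (F j) = j)"

definition sweepout_width ::
  "('a, 'b) monoid_scheme \<Rightarrow> 'a set \<Rightarrow> 'a set \<Rightarrow> (nat \<Rightarrow> 'a set set) \<Rightarrow> nat" where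
  "sweepout_width G S H F =
     Max {card (schreier_boundary G S H (F j)) | j. j \<le> card (lcosets\<^bsub>G\<^esub> H)}"

definition sweepout_width_min :: "('a, 'b) monoid_scheme \<Rightarrow> 'a set \<Rightarrow> 'a set \<Rightarrow> nat" where
  "sweepout_width_min G S H =
     Min {sweepout_width G S H F | F. is_sweepout (lcosets\<^bsub>G\<^esub> H) F}"

end

theory Submission
  imports Defs
begin


lemma card_filter_sum:
  assumes "finite A" shows "card {x\<in>A. P x} = (\<Sum>x\<in>A. if P x then 1 else (0::nat))"
proof -
  have "card {x\<in>A. P x} = (\<Sum>x\<in>{x\<in>A. P x}. (1::nat))" by (rule card_eq_sum)
  also have "\<dots> = (\<Sum>x\<in>A. if P x then 1 else (0::nat))"
    by (rule sum.inter_filter[OF assms])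
  finally show ?thesis .
qed

definition bdry :: "('x \<Rightarrow> 'x \<Rightarrow> bool) \<Rightarrow> 'x set \<Rightarrow> 'x set \<Rightarrow> 'x set" where
  "bdry adj W A = {y\<in>A. \<exists>z\<in>W-A. adj y z}"

lemma enum_exists:
  fixes X :: "'x set" and c :: real and K :: nat
  assumes finX: "finite X" and c0: "c \<ge> 0"
    and loc: "\<And>W. W \<subseteq> X \<Longrightarrow> W \<noteq> {} \<Longrightarrow> \<exists>B\<subseteq>W. B \<noteq> {} \<and> card B \<le> K \<and>
               real (card (bdry adj W B)) \<le> c * real (card B)"
  shows "W \<subseteq> X \<Longrightarrow> \<exists>xs. distinct xs \<and> set xs = W \<and>
     (\<forall>j. real (card (bdry adj W (set (take j xs)))) \<le> c * real (card W) + real K)"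
proof (induction "card W" arbitrary: W rule: less_induct)
  case less
  show ?case
  proof (cases "W = {}")
    case True
    then show ?thesis by (intro exI[of _ "[]"]) (simp add: bdry_def)
  next
    case False
    have finW: "finite W" using less.prems finX finite_subset by blast
    obtain B where B: "B \<subseteq> W" "B \<noteq> {}" "card B \<le> K"
      "real (card (bdry adj W B)) \<le> c * real (card B)"
      using loc[OF less.prems False] by blast
    have finB: "finite B" using B(1) finW finite_subset by blast
    define W' where "W' = W - B"
    have cardW': "card W' < card W"
    proof -
      have "W - B \<subset> W" using B(1,2) by blast
      thus ?thesis using psubset_card_mono[OF finW] unfolding W'_def by blast
    qed
    have "W' \<subseteq> X" using less.prems W'_def by blast
    from less.hyps[OF cardW' this] obtain ys where ys: "distinct ys" "set ys = W'"
      "\<forall>j. real (card (bdry adj W' (set (take j ys)))) \<le> c * real (card W') + real K" by blast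
    obtain bs where bs: "distinct bs" "set bs = B" using finite_distinct_list[OF finB] by blast
    have lenbs: "length bs = card B" using bs distinct_card by fastforce
    have cW: "card W = card B + card W'" unfolding W'_def
      using finW B(1) finB by (simp add: card_Diff_subset card_mono)
    define xs where "xs = bs @ ys"
    have "distinct xs" unfolding xs_def using bs ys W'_def by auto
    moreover have "set xs = W" unfolding xs_def using bs ys W'_def B(1) by auto
    moreover have "real (card (bdry adj W (set (take j xs)))) \<le> c * real (card W) + real K" for j
    proof (cases "j \<le> length bs")
      case True
      have "set (take j xs) = set (take j bs)" unfolding xs_def using True by simp
      moreover have "card (set (take j bs)) \<le> K"
        using card_length[of "take j bs"] True lenbs B(3) by simp
      ultimately have "card (bdry adj W (set (take j xs))) \<le> K"
        unfolding bdry_def using card_mono[OF List.finite_set, of "{y \<in> set (take j xs). \<exists>z\<in>W - set (take j xs). adj y z}" "take j xs"] by auto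
      moreover have "c * real (card W) \<ge> 0" using c0 by simp
      ultimately show ?thesis by linarith
    next
      case False
      define P where "P = set (take (j - length bs) ys)"
      have st: "set (take j xs) = B \<union> P" unfolding xs_def P_def using False bs by simp
      have PW': "P \<subseteq> W'" unfolding P_def using set_take_subset[of "j - length bs" ys] ys(2) by simp
      have "bdry adj W (B \<union> P) \<subseteq> bdry adj W B \<union> bdry adj W' P"
        using PW' unfolding bdry_def W'_def by blast
      hence "card (bdry adj W (B \<union> P)) \<le> card (bdry adj W B) + card (bdry adj W' P)"
      proof -
        have "bdry adj W B \<union> bdry adj W' P \<subseteq> W" using B(1) PW' unfolding W'_def bdry_def by blast
        hence f: "finite (bdry adj W B \<union> bdry adj W' P)" using finW finite_subset by blast
        show ?thesis using card_mono[OF f \<open>bdry adj W (B \<union> P) \<subseteq> _\<close>] card_Un_le[of "bdry adj W B" "bdry adj W' P"] by linarith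
      qed
      hence "real (card (bdry adj W (B \<union> P))) \<le> real (card (bdry adj W B)) + real (card (bdry adj W' P))"
        by linarith
      also have "\<dots> \<le> c * real (card B) + (c * real (card W') + real K)"
        using B(4) ys(3) P_def by (intro add_mono) auto
      also have "\<dots> = c * real (card W) + real K" using cW by (simp add: algebra_simps)
      finally show ?thesis using st by simp
    qed
    ultimately show ?thesis by blast
  qed
qed




lemma count_preimage:
  fixes act :: "'g \<Rightarrow> 'x \<Rightarrow> 'x"
  assumes finX: "finite X" and finF: "finite F"
    and bij: "\<And>f. f \<in> F \<Longrightarrow> bij_betw (act f) X X"
    and y: "y \<in> X"
  shows "(\<Sum>x\<in>X. card {f\<in>F. act f x = y \<and> P f}) = card {f\<in>F. P f}"
proof -
  have one: "card {x\<in>X. act f x = y} = 1" if f: "f \<in> F" for f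
  proof -
    have b: "bij_betw (act f) X X" using bij f .
    obtain x0 where x0: "x0 \<in> X" "act f x0 = y"
      using bij_betw_imp_surj_on[OF b] y by (metis imageE)
    have "{x\<in>X. act f x = y} = {x0}"
      using x0 bij_betw_imp_inj_on[OF b] unfolding inj_on_def by blast
    thus ?thesis by simp
  qed
  have "(\<Sum>x\<in>X. card {f\<in>F. act f x = y \<and> P f})
      = (\<Sum>x\<in>X. \<Sum>f\<in>F. if act f x = y \<and> P f then 1 else (0::nat))"
    using finF by (simp add: card_filter_sum)
  also have "\<dots> = (\<Sum>f\<in>F. \<Sum>x\<in>X. if act f x = y \<and> P f then 1 else (0::nat))"
    by (rule sum.swap)
  also have "\<dots> = (\<Sum>f\<in>F. if P f then 1 else (0::nat))"
  proof (rule sum.cong[OF refl])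
    fix f assume f: "f \<in> F"
    show "(\<Sum>x\<in>X. if act f x = y \<and> P f then 1 else (0::nat)) = (if P f then 1 else 0)"
    proof (cases "P f")
      case True
      have "(\<Sum>x\<in>X. if act f x = y \<and> P f then 1 else (0::nat)) = (\<Sum>x\<in>X. if act f x = y then 1 else (0::nat))"
        using True by simp
      also have "\<dots> = card {x\<in>X. act f x = y}" using finX by (simp add: card_filter_sum)
      finally show ?thesis using one[OF f] True by simp
    qed simp
  qed
  also have "\<dots> = card {f\<in>F. P f}" using finF by (simp add: card_filter_sum)
  finally show ?thesis .
qed




lemma local_lemma:
  fixes act :: "'g \<Rightarrow> 'x \<Rightarrow> 'x" and mul :: "'g \<Rightarrow> 'g \<Rightarrow> 'g" and adj :: "'x \<Rightarrow> 'x \<Rightarrow> bool"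
    and \<delta> :: real
  assumes finX: "finite X" and finS: "finite S" and finF: "finite F" and Fne: "F \<noteq> {}"
    and bij: "\<And>f. f \<in> F \<Longrightarrow> bij_betw (act f) X X"
    and comp: "\<And>s f x. s \<in> S \<Longrightarrow> f \<in> F \<Longrightarrow> x \<in> X \<Longrightarrow> act (mul s f) x = act s (act f x)"
    and injm: "\<And>s. s \<in> S \<Longrightarrow> inj_on (mul s) F"
    and fol: "\<And>s. s \<in> S \<Longrightarrow> real (card {f\<in>F. mul s f \<notin> F}) \<le> \<delta> * real (card F)"
    and adjS: "\<And>y z. y \<in> X \<Longrightarrow> z \<in> X \<Longrightarrow> adj y z \<Longrightarrow> \<exists>s\<in>S. z = act s y"
    and WX: "W \<subseteq> X" and Wne: "W \<noteq> {}"
  shows "\<exists>B\<subseteq>W. B \<noteq> {} \<and> card B \<le> card F \<and>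
           real (card (bdry adj W B)) \<le> real (card S) * \<delta> * real (card B)"
proof -
  define N where "N = card F"
  define w where "w x y = card {f\<in>F. act f x = y}" for x y
  define B where "B x t = {y\<in>W. t \<le> w x y}" for x t
  define c where "c = real (card S) * \<delta>"
  define D where "D x y s = card {f\<in>F. act f x = y \<and> mul s f \<notin> F}" for x y s
  have finW: "finite W" using WX finX finite_subset by blast
  have wN: "w x y \<le> N" for x y unfolding w_def N_def using finF by (simp add: card_mono)
  have Bsize: "card (B x t) \<le> N" if "t \<ge> 1" for x t
  proof -
    have "B x t \<subseteq> (\<lambda>f. act f x) ` F"
    proof
      fix y assume "y \<in> B x t"
      hence "w x y \<ge> 1" using that unfolding B_def by auto
      hence "{f\<in>F. act f x = y} \<noteq> {}" unfolding w_def by (metis card.empty not_one_le_zero)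
      thus "y \<in> (\<lambda>f. act f x) ` F" by blast
    qed
    hence "card (B x t) \<le> card ((\<lambda>f. act f x) ` F)" using finF by (simp add: card_mono)
    also have "\<dots> \<le> N" unfolding N_def using card_image_le[OF finF] .
    finally show ?thesis .
  qed
  have Bsum_x: "(\<Sum>t\<in>{1..N}. card (B x t)) = (\<Sum>y\<in>W. w x y)" for x
  proof -
    have "(\<Sum>t\<in>{1..N}. card (B x t)) = (\<Sum>t\<in>{1..N}. \<Sum>y\<in>W. if t \<le> w x y then 1 else (0::nat))"
      unfolding B_def using finW by (simp add: card_filter_sum)
    also have "\<dots> = (\<Sum>y\<in>W. \<Sum>t\<in>{1..N}. if t \<le> w x y then 1 else (0::nat))" by (rule sum.swap)
    also have "\<dots> = (\<Sum>y\<in>W. w x y)"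
    proof (rule sum.cong[OF refl])
      fix y
      have "(\<Sum>t\<in>{1..N}. if t \<le> w x y then 1 else (0::nat)) = card {t\<in>{1..N}. t \<le> w x y}"
        by (rule card_filter_sum[symmetric, OF finite_atLeastAtMost])
      also have "{t\<in>{1..N}. t \<le> w x y} = {1..w x y}" using wN[of x y] by auto
      finally show "(\<Sum>t\<in>{1..N}. if t \<le> w x y then 1 else (0::nat)) = w x y" by simp
    qed
    finally show ?thesis .
  qed
  have Bsum: "(\<Sum>x\<in>X. \<Sum>t\<in>{1..N}. card (B x t)) = card W * N"
  proof -
    have "(\<Sum>x\<in>X. \<Sum>t\<in>{1..N}. card (B x t)) = (\<Sum>x\<in>X. \<Sum>y\<in>W. w x y)" using Bsum_x by simp
    also have "\<dots> = (\<Sum>y\<in>W. \<Sum>x\<in>X. w x y)" by (rule sum.swap)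
    also have "\<dots> = (\<Sum>y\<in>W. N)"
    proof (rule sum.cong[OF refl])
      fix y assume "y \<in> W"
      hence "y \<in> X" using WX by blast
      from count_preimage[OF finX finF bij this, where P="\<lambda>_. True"]
      show "(\<Sum>x\<in>X. w x y) = N" unfolding w_def N_def by simp
    qed
    finally show ?thesis by simp
  qed
  have wD: "w x y \<le> w x (act s y) + D x y s" if "x \<in> X" "s \<in> S" for x y s
  proof -
    have "{f\<in>F. act f x = y} = {f\<in>F. act f x = y \<and> mul s f \<in> F} \<union> {f\<in>F. act f x = y \<and> mul s f \<notin> F}"
      by blast
    hence "w x y \<le> card {f\<in>F. act f x = y \<and> mul s f \<in> F} + D x y s"
      unfolding w_def D_def by (metis (no_types, lifting) card_Un_le)
    moreover have "card {f\<in>F. act f x = y \<and> mul s f \<in> F} \<le> w x (act s y)"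
    proof -
      have "mul s ` {f\<in>F. act f x = y \<and> mul s f \<in> F} \<subseteq> {f\<in>F. act f x = act s y}"
        using comp[OF that(2) _ that(1)] by auto
      moreover have "inj_on (mul s) {f\<in>F. act f x = y \<and> mul s f \<in> F}"
        using injm[OF that(2)] by (rule inj_on_subset) blast
      ultimately show ?thesis unfolding w_def using finF
        by (metis (no_types, lifting) card_inj_on_le finite_subset mem_Collect_eq subsetI)
    qed
    ultimately show ?thesis by linarith
  qed
  have bd_x_t: "card (bdry adj W (B x t)) \<le>
      (\<Sum>y\<in>W. \<Sum>s\<in>S. if w x (act s y) < t \<and> t \<le> w x y then 1 else (0::nat))" for x t
  proof -
    have "bdry adj W (B x t) \<subseteq> {y\<in>W. \<exists>s\<in>S. w x (act s y) < t \<and> t \<le> w x y}"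
    proof
      fix y assume "y \<in> bdry adj W (B x t)"
      then obtain z where y: "y \<in> W" "t \<le> w x y" and z: "z \<in> W" "\<not> t \<le> w x z" "adj y z"
        unfolding bdry_def B_def by auto
      obtain s where "s \<in> S" "z = act s y" using adjS[of y z] y z WX by blast
      thus "y \<in> {y\<in>W. \<exists>s\<in>S. w x (act s y) < t \<and> t \<le> w x y}" using y z by (auto simp: not_le)
    qed
    hence "card (bdry adj W (B x t)) \<le> card {y\<in>W. \<exists>s\<in>S. w x (act s y) < t \<and> t \<le> w x y}"
      using finW by (simp add: card_mono)
    also have "\<dots> = (\<Sum>y\<in>W. if \<exists>s\<in>S. w x (act s y) < t \<and> t \<le> w x y then 1 else (0::nat))"
      using finW by (rule card_filter_sum)
    also have "\<dots> \<le> (\<Sum>y\<in>W. \<Sum>s\<in>S. if w x (act s y) < t \<and> t \<le> w x y then 1 else (0::nat))"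
    proof (rule sum_mono)
      fix y
      show "(if \<exists>s\<in>S. w x (act s y) < t \<and> t \<le> w x y then 1 else (0::nat))
          \<le> (\<Sum>s\<in>S. if w x (act s y) < t \<and> t \<le> w x y then 1 else (0::nat))"
      proof (cases "\<exists>s\<in>S. w x (act s y) < t \<and> t \<le> w x y")
        case True
        then obtain s where s: "s \<in> S" "w x (act s y) < t \<and> t \<le> w x y" by blast
        have "(if w x (act s y) < t \<and> t \<le> w x y then 1 else (0::nat))
            \<le> (\<Sum>s\<in>S. if w x (act s y) < t \<and> t \<le> w x y then 1 else (0::nat))"
          by (rule member_le_sum[OF s(1) _ finS]) simp
        thus ?thesis using True s by simp
      qed (subst if_not_P, assumption, simp)
    qed
    finally show ?thesis .
  qed
  have tsum: "(\<Sum>t\<in>{1..N}. if w x (act s y) < t \<and> t \<le> w x y then 1 else (0::nat)) \<le> D x y s"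
    if "x \<in> X" "s \<in> S" for x y s
  proof -
    have "(\<Sum>t\<in>{1..N}. if w x (act s y) < t \<and> t \<le> w x y then 1 else (0::nat))
        = card {t\<in>{1..N}. w x (act s y) < t \<and> t \<le> w x y}"
      by (rule card_filter_sum[symmetric, OF finite_atLeastAtMost])
    also have "\<dots> \<le> card {w x (act s y)<..w x y}" by (rule card_mono) auto
    also have "\<dots> = w x y - w x (act s y)" by simp
    also have "\<dots> \<le> D x y s" using wD[OF that, of y] by linarith
    finally show ?thesis .
  qed
  have bdsum: "(\<Sum>x\<in>X. \<Sum>t\<in>{1..N}. card (bdry adj W (B x t))) \<le> (\<Sum>y\<in>W. \<Sum>s\<in>S. card {f\<in>F. mul s f \<notin> F})"
  proof -
    have "(\<Sum>x\<in>X. \<Sum>t\<in>{1..N}. card (bdry adj W (B x t)))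
        \<le> (\<Sum>x\<in>X. \<Sum>t\<in>{1..N}. \<Sum>y\<in>W. \<Sum>s\<in>S. if w x (act s y) < t \<and> t \<le> w x y then 1 else (0::nat))"
      by (intro sum_mono bd_x_t)
    also have "\<dots> = (\<Sum>x\<in>X. \<Sum>y\<in>W. \<Sum>s\<in>S. \<Sum>t\<in>{1..N}. if w x (act s y) < t \<and> t \<le> w x y then 1 else (0::nat))"
    proof (rule sum.cong[OF refl])
      fix x
      have "(\<Sum>t\<in>{1..N}. \<Sum>y\<in>W. \<Sum>s\<in>S. if w x (act s y) < t \<and> t \<le> w x y then 1 else (0::nat))
          = (\<Sum>y\<in>W. \<Sum>t\<in>{1..N}. \<Sum>s\<in>S. if w x (act s y) < t \<and> t \<le> w x y then 1 else (0::nat))"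
        by (rule sum.swap)
      also have "\<dots> = (\<Sum>y\<in>W. \<Sum>s\<in>S. \<Sum>t\<in>{1..N}. if w x (act s y) < t \<and> t \<le> w x y then 1 else (0::nat))"
        by (rule sum.cong[OF refl]) (rule sum.swap)
      finally show "(\<Sum>t\<in>{1..N}. \<Sum>y\<in>W. \<Sum>s\<in>S. if w x (act s y) < t \<and> t \<le> w x y then 1 else (0::nat))
          = (\<Sum>y\<in>W. \<Sum>s\<in>S. \<Sum>t\<in>{1..N}. if w x (act s y) < t \<and> t \<le> w x y then 1 else (0::nat))" .
    qed
    also have "\<dots> \<le> (\<Sum>x\<in>X. \<Sum>y\<in>W. \<Sum>s\<in>S. D x y s)"
      by (intro sum_mono tsum) auto
    also have "\<dots> = (\<Sum>y\<in>W. \<Sum>s\<in>S. \<Sum>x\<in>X. D x y s)"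
      by (subst sum.swap) (rule sum.cong[OF refl], rule sum.swap)
    also have "\<dots> = (\<Sum>y\<in>W. \<Sum>s\<in>S. card {f\<in>F. mul s f \<notin> F})"
    proof (intro sum.cong[OF refl])
      fix y s assume "y \<in> W"
      hence "y \<in> X" using WX by blast
      from count_preimage[OF finX finF bij this, where P="\<lambda>f. mul s f \<notin> F"]
      show "(\<Sum>x\<in>X. D x y s) = card {f\<in>F. mul s f \<notin> F}" unfolding D_def .
    qed
    finally show ?thesis .
  qed
  have bdreal: "(\<Sum>x\<in>X. \<Sum>t\<in>{1..N}. real (card (bdry adj W (B x t)))) \<le> c * (real (card W) * real N)"
  proof -
    have "(\<Sum>x\<in>X. \<Sum>t\<in>{1..N}. real (card (bdry adj W (B x t))))
        = real (\<Sum>x\<in>X. \<Sum>t\<in>{1..N}. card (bdry adj W (B x t)))" by simp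
    also have "\<dots> \<le> real (\<Sum>y\<in>W. \<Sum>s\<in>S. card {f\<in>F. mul s f \<notin> F})"
      using bdsum by linarith
    also have "\<dots> = (\<Sum>y\<in>W. \<Sum>s\<in>S. real (card {f\<in>F. mul s f \<notin> F}))" by simp
    also have "\<dots> \<le> (\<Sum>y\<in>W. \<Sum>s\<in>S. \<delta> * real N)"
      unfolding N_def by (intro sum_mono fol)
    also have "\<dots> = c * (real (card W) * real N)" unfolding c_def by simp
    finally show ?thesis .
  qed
  have Breal: "(\<Sum>x\<in>X. \<Sum>t\<in>{1..N}. real (card (B x t))) = real (card W) * real N"
  proof -
    have "(\<Sum>x\<in>X. \<Sum>t\<in>{1..N}. real (card (B x t))) = real (\<Sum>x\<in>X. \<Sum>t\<in>{1..N}. card (B x t))" by simp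
    also have "\<dots> = real (card W * N)" using Bsum by (simp only:)
    finally show ?thesis by simp
  qed
  show ?thesis
  proof (rule ccontr)
    assume neg: "\<not> ?thesis"
    have good: "real (card (bdry adj W (B x t))) - c * real (card (B x t)) > 0"
      if "t \<ge> 1" "B x t \<noteq> {}" for x t
    proof -
      have "B x t \<subseteq> W" unfolding B_def by blast
      thus ?thesis using neg Bsize[OF that(1)] that(2) unfolding c_def N_def by force
    qed
    have nonneg: "real (card (bdry adj W (B x t))) - c * real (card (B x t)) \<ge> 0" if "t \<ge> 1" for x t
    proof (cases "B x t = {}")
      case True thus ?thesis by (simp add: bdry_def)
    next
      case False thus ?thesis using good[OF that False] by linarith
    qed
    obtain y0 where y0: "y0 \<in> W" using Wne by blast
    obtain f0 where f0: "f0 \<in> F" using Fne by blast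
    obtain x0 where x0: "x0 \<in> X" "act f0 x0 = y0"
      using bij_betw_imp_surj_on[OF bij[OF f0]] y0 WX by (metis imageE subsetD)
    have "w x0 y0 \<ge> 1" unfolding w_def
      using f0 x0 finF by (metis (mono_tags, lifting) One_nat_def Suc_leI card_gt_0_iff empty_iff finite_subset mem_Collect_eq subsetI)
    hence "y0 \<in> B x0 1" unfolding B_def using y0 by simp
    hence pos: "real (card (bdry adj W (B x0 1))) - c * real (card (B x0 1)) > 0" using good by blast
    have N1: "1 \<le> N" unfolding N_def using finF Fne by (simp add: Suc_leI card_gt_0_iff)
    have "0 < (\<Sum>x\<in>X. \<Sum>t\<in>{1..N}. real (card (bdry adj W (B x t))) - c * real (card (B x t)))"
    proof (rule sum_pos2[OF finX x0(1)])
      show "0 < (\<Sum>t\<in>{1..N}. real (card (bdry adj W (B x0 t))) - c * real (card (B x0 t)))"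
        by (rule sum_pos2[of _ 1]) (use pos N1 nonneg in auto)
      show "\<And>x. x \<in> X \<Longrightarrow> 0 \<le> (\<Sum>t\<in>{1..N}. real (card (bdry adj W (B x t))) - c * real (card (B x t)))"
        by (rule sum_nonneg) (use nonneg in auto)
    qed
    also have "\<dots> = (\<Sum>x\<in>X. \<Sum>t\<in>{1..N}. real (card (bdry adj W (B x t)))) - c * (\<Sum>x\<in>X. \<Sum>t\<in>{1..N}. real (card (B x t)))"
      by (simp add: sum_subtractf sum_distrib_left)
    also have "\<dots> \<le> 0" using bdreal Breal by simp
    finally show False by simp
  qed
qed




lemma (in group) lcos_in:
  assumes "subgroup H G" "g \<in> carrier G" "x \<in> lcosets H"
  shows "g <#\<^bsub>G\<^esub> x \<in> lcosets H"
proof -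
  obtain a where a: "a \<in> carrier G" "x = a <#\<^bsub>G\<^esub> H" using assms(3) unfolding LCOSETS_def by blast
  have "g <#\<^bsub>G\<^esub> x = (g \<otimes> a) <#\<^bsub>G\<^esub> H" using a assms(1,2) lcos_m_assoc subgroup.subset by metis
  thus ?thesis using a assms(2) unfolding LCOSETS_def by blast
qed

lemma (in group) lcos_sub:
  assumes "subgroup H G" "x \<in> lcosets H" shows "x \<subseteq> carrier G"
  using subgroup.lcosets_carrier[OF assms(1) is_group assms(2)] .

lemma (in group) lcos_inv_cancel:
  assumes "subgroup H G" "g \<in> carrier G" "x \<in> lcosets H"
  shows "inv g <#\<^bsub>G\<^esub> (g <#\<^bsub>G\<^esub> x) = x"
proof -
  have "inv g <#\<^bsub>G\<^esub> (g <#\<^bsub>G\<^esub> x) = (inv g \<otimes> g) <#\<^bsub>G\<^esub> x"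
    using lcos_m_assoc[OF lcos_sub[OF assms(1,3)]] assms(2) by simp
  also have "\<dots> = x" using assms lcos_mult_one lcos_sub by simp
  finally show ?thesis .
qed

lemma (in group) width_bound:
  fixes \<delta> :: real
  assumes finS: "finite S" and SG: "S \<subseteq> carrier G" and Sinv: "\<forall>s\<in>S. inv s \<in> S"
    and H: "subgroup H G" and finX: "finite (lcosets H)"
    and finF: "finite F" and Fne: "F \<noteq> {}" and FG: "F \<subseteq> carrier G" and d0: "\<delta> \<ge> 0"
    and fol: "\<forall>g\<in>S. real (card (((g <#\<^bsub>G\<^esub> F) - F) \<union> (F - (g <#\<^bsub>G\<^esub> F)))) < \<delta> * real (card F)"
  shows "real (sweepout_width_min G S H) \<le> real (card S) * \<delta> * real (card (lcosets H)) + real (card F)"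
proof -
  define X where "X = lcosets H"
  define n where "n = card X"
  define adj where "adj = schreier_adj G S"
  define c where "c = real (card S) * \<delta>"
  have c0: "c \<ge> 0" unfolding c_def using d0 by simp
  have loc: "\<exists>B\<subseteq>W. B \<noteq> {} \<and> card B \<le> card F \<and> real (card (bdry adj W B)) \<le> c * real (card B)"
    if W: "W \<subseteq> X" "W \<noteq> {}" for W
    unfolding c_def
  proof (rule local_lemma[where act = "\<lambda>g x. g <#\<^bsub>G\<^esub> x" and mul = "(\<otimes>)" and X = X])
    show "finite X" using finX X_def by simp
    show "finite S" by fact
    show "finite F" by fact
    show "F \<noteq> {}" by fact
    show "W \<subseteq> X" "W \<noteq> {}" by fact+
    show "bij_betw (\<lambda>x. f <#\<^bsub>G\<^esub> x) X X" if f: "f \<in> F" for f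
    proof (rule bij_betw_byWitness[where f' = "\<lambda>x. inv f <#\<^bsub>G\<^esub> x"])
      have fG: "f \<in> carrier G" using f FG by blast
      show "\<forall>a\<in>X. inv f <#\<^bsub>G\<^esub> (f <#\<^bsub>G\<^esub> a) = a" using lcos_inv_cancel[OF H fG] X_def by simp
      show "\<forall>a\<in>X. f <#\<^bsub>G\<^esub> (inv f <#\<^bsub>G\<^esub> a) = a" using lcos_inv_cancel[OF H inv_closed[OF fG]] fG X_def by simp
      show "(\<lambda>x. f <#\<^bsub>G\<^esub> x) ` X \<subseteq> X" using lcos_in[OF H fG] X_def by auto
      show "(\<lambda>x. inv f <#\<^bsub>G\<^esub> x) ` X \<subseteq> X" using lcos_in[OF H inv_closed[OF fG]] X_def by auto
    qed
    show "(s \<otimes> f) <#\<^bsub>G\<^esub> x = s <#\<^bsub>G\<^esub> (f <#\<^bsub>G\<^esub> x)" if "s \<in> S" "f \<in> F" "x \<in> X" for s f x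
      using lcos_m_assoc[OF lcos_sub[OF H], of x s f] that SG FG X_def by auto
    show "inj_on ((\<otimes>) s) F" if "s \<in> S" for s
      using that SG FG unfolding inj_on_def by (metis Units_eq Units_l_cancel subsetD mem_Collect_eq)
    show "real (card {f\<in>F. s \<otimes> f \<notin> F}) \<le> \<delta> * real (card F)" if s: "s \<in> S" for s
    proof -
      have sG: "s \<in> carrier G" using s SG by blast
      have fin1: "finite (s <#\<^bsub>G\<^esub> F)" unfolding l_coset_def using finF by simp
      have "(\<otimes>) s ` {f\<in>F. s \<otimes> f \<notin> F} \<subseteq> ((s <#\<^bsub>G\<^esub> F) - F) \<union> (F - (s <#\<^bsub>G\<^esub> F))"
        unfolding l_coset_def by auto
      moreover have "inj_on ((\<otimes>) s) {f\<in>F. s \<otimes> f \<notin> F}"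
        using sG FG unfolding inj_on_def by (metis Units_eq Units_l_cancel subsetD mem_Collect_eq)
      ultimately have "card {f\<in>F. s \<otimes> f \<notin> F} \<le> card (((s <#\<^bsub>G\<^esub> F) - F) \<union> (F - (s <#\<^bsub>G\<^esub> F)))"
        using fin1 finF by (intro card_inj_on_le) auto
      thus ?thesis using fol s by (meson less_eq_real_def of_nat_le_iff order_trans)
    qed
    show "\<exists>s\<in>S. z = s <#\<^bsub>G\<^esub> y" if yz: "y \<in> X" "z \<in> X" "adj y z" for y z
    proof -
      obtain s where s: "s \<in> S" "z = s <#\<^bsub>G\<^esub> y \<or> y = s <#\<^bsub>G\<^esub> z"
        using yz(3) unfolding adj_def schreier_adj_def by blast
      show ?thesis
      proof (cases "z = s <#\<^bsub>G\<^esub> y")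
        case True thus ?thesis using s by blast
      next
        case False
        hence "y = s <#\<^bsub>G\<^esub> z" using s by blast
        hence "inv s <#\<^bsub>G\<^esub> y = z" using lcos_inv_cancel[OF H _ yz(2)[unfolded X_def]] s SG by blast
        thus ?thesis using Sinv s by metis
      qed
    qed
  qed
  obtain xs where xs: "distinct xs" "set xs = X"
    "\<forall>j. real (card (bdry adj X (set (take j xs)))) \<le> c * real (card X) + real (card F)"
    using enum_exists[OF _ c0 loc, of X] finX X_def by blast
  define Fs where "Fs j = set (take j xs)" for j
  have len: "length xs = n" unfolding n_def using xs distinct_card by metis
  have sw: "is_sweepout X Fs"
    unfolding is_sweepout_def
  proof (intro conjI allI impI)
    show "Fs 0 = {}" unfolding Fs_def by simp
    show "Fs (card X) = X" unfolding Fs_def using len xs n_def by simp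
    show "Fs j \<subseteq> Fs (Suc j)" for j unfolding Fs_def by (rule set_take_subset_set_take) simp
    show "Fs j \<subseteq> X" for j unfolding Fs_def using set_take_subset[of j xs] xs by simp
    show "card (Fs j) = j" if "j \<le> card X" for j
      unfolding Fs_def using distinct_card[OF distinct_take[OF xs(1)]] that len n_def by simp
  qed
  have bdeq: "schreier_boundary G S H A = bdry adj X A" for A
    unfolding schreier_boundary_def bdry_def adj_def X_def by simp
  have fin_vals: "finite {card (schreier_boundary G S H (Fs j)) | j. j \<le> card X}"
    by simp
  have ne_vals: "{card (schreier_boundary G S H (Fs j)) | j. j \<le> card X} \<noteq> {}" by blast
  have "sweepout_width G S H Fs \<in> {card (schreier_boundary G S H (Fs j)) | j. j \<le> card X}"
    unfolding sweepout_width_def X_def using Max_in[OF fin_vals[unfolded X_def] ne_vals[unfolded X_def]] .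
  then obtain j where "sweepout_width G S H Fs = card (bdry adj X (Fs j))" using bdeq by auto
  hence wb: "real (sweepout_width G S H Fs) \<le> c * real (card X) + real (card F)"
    using xs(3) Fs_def by simp
  have vals_sub: "{sweepout_width G S H F | F. is_sweepout (lcosets H) F} \<subseteq> {..n}"
  proof
    fix v assume "v \<in> {sweepout_width G S H F | F. is_sweepout (lcosets H) F}"
    then obtain F' where F': "v = sweepout_width G S H F'" "is_sweepout X F'" using X_def by auto
    have "card (schreier_boundary G S H (F' j)) \<le> n" if "j \<le> card X" for j
    proof -
      have "schreier_boundary G S H (F' j) \<subseteq> X"
        using F'(2) that unfolding is_sweepout_def schreier_boundary_def by blast
      thus ?thesis unfolding n_def using finX X_def by (simp add: card_mono)
    qed
    hence "Max {card (schreier_boundary G S H (F' j)) | j. j \<le> card X} \<le> n"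
      by (subst Max_le_iff) auto
    thus "v \<in> {..n}" using F'(1) unfolding sweepout_width_def X_def by simp
  qed
  have "sweepout_width_min G S H \<le> sweepout_width G S H Fs"
    unfolding sweepout_width_min_def
    by (rule Min_le[OF finite_subset[OF vals_sub finite_atMost]]) (use sw X_def in blast)
  hence "real (sweepout_width_min G S H) \<le> real (sweepout_width G S H Fs)" by simp
  also have "\<dots> \<le> c * real (card X) + real (card F)" by (rule wb)
  finally show ?thesis unfolding c_def X_def .
qed




theorem theorem1p3:
  fixes G :: "('a, 'b) monoid_scheme" and S :: "'a set" and H :: "nat \<Rightarrow> 'a set"
  assumes "group G"
    and "amenable_group G"
    and "finite S" and "S \<subseteq> carrier G"
    and "\<forall>s\<in>S. inv\<^bsub>G\<^esub> s \<in> S"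
    and "generate G S = carrier G"
    and "\<forall>i. subgroup (H i) G"
    and "\<forall>i. finite (lcosets\<^bsub>G\<^esub> (H i))"
    and "filterlim (\<lambda>i. card (lcosets\<^bsub>G\<^esub> (H i))) at_top sequentially"
  shows "(\<lambda>i. real (sweepout_width_min G S (H i)) / real (card (lcosets\<^bsub>G\<^esub> (H i))))
           \<longlonglongrightarrow> 0"
proof (rule LIMSEQ_I)
  fix r :: real assume r: "0 < r"
  define \<delta> where "\<delta> = r / (2 * (real (card S) + 1))"
  have d0: "\<delta> > 0" unfolding \<delta>_def using r by simp
  have cd: "real (card S) * \<delta> < r / 2"
  proof -
    have "real (card S) * \<delta> = (r / 2) * (real (card S) / (real (card S) + 1))"
      unfolding \<delta>_def by (simp add: field_simps)
    also have "\<dots> < (r / 2) * 1"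
      using r by (intro mult_strict_left_mono) (simp_all add: field_simps)
    finally show ?thesis by simp
  qed
  obtain F where F: "finite F" "F \<noteq> {}" "F \<subseteq> carrier G"
    "\<forall>g\<in>S. real (card (((g <#\<^bsub>G\<^esub> F) - F) \<union> (F - (g <#\<^bsub>G\<^esub> F)))) < \<delta> * real (card F)"
    using assms(2)[unfolded amenable_group_def, rule_format, OF conjI[OF assms(3) conjI[OF assms(4) d0]]] by (elim exE conjE) blast
  define N where "N = card F"
  define M where "M = nat \<lceil>2 * real N / r\<rceil> + 1"
  have "\<forall>\<^sub>F i in sequentially. M \<le> card (lcosets\<^bsub>G\<^esub> (H i))"
    using assms(9) unfolding filterlim_at_top by blast
  then obtain no where no: "\<And>i. i \<ge> no \<Longrightarrow> M \<le> card (lcosets\<^bsub>G\<^esub> (H i))"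
    unfolding eventually_sequentially by blast
  show "\<exists>no. \<forall>i\<ge>no. norm (real (sweepout_width_min G S (H i)) / real (card (lcosets\<^bsub>G\<^esub> (H i))) - 0) < r"
  proof (intro exI allI impI)
    fix i assume i: "i \<ge> no"
    define n where "n = card (lcosets\<^bsub>G\<^esub> (H i))"
    have nM: "M \<le> n" using no[OF i] n_def by simp
    have Mgt: "2 * real N / r < real M" unfolding M_def by linarith
    hence ngt: "2 * real N / r < real n" using nM by linarith
    have npos: "real n > 0" using nM M_def by simp
    have wb: "real (sweepout_width_min G S (H i)) \<le> real (card S) * \<delta> * real n + real N"
      using group.width_bound[OF assms(1) assms(3,4,5) spec[OF assms(7), of i] spec[OF assms(8), of i] F(1,2,3) less_imp_le[OF d0] F(4)]
      unfolding n_def N_def .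
    have "real (sweepout_width_min G S (H i)) / real n \<le> (real (card S) * \<delta> * real n + real N) / real n"
      using wb npos by (simp add: divide_right_mono)
    also have "\<dots> = real (card S) * \<delta> + real N / real n" using npos by (simp add: field_simps)
    also have "\<dots> < r / 2 + r / 2"
    proof -
      have "real N < r / 2 * real n" using ngt r by (simp add: field_simps)
      hence "real N / real n < r / 2" using npos by (simp add: field_simps)
      thus ?thesis using cd by linarith
    qed
    finally have lt: "real (sweepout_width_min G S (H i)) / real n < r" by simp
    have "real (sweepout_width_min G S (H i)) / real n \<ge> 0" by simp
    thus "norm (real (sweepout_width_min G S (H i)) / real (card (lcosets\<^bsub>G\<^esub> (H i))) - 0) < r"
      using lt n_def by simp
  qed
qed


end
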